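(* For every $k\in\mathbb{N}$, the feasible region $P_k\subseteq[0,1]^{\mathcal{S}_k}$ is convex.
   Context: $\mathcal{S}_n$ denotes the set of permutations of $[n]$ and $\mathcal{S}$ the set of all finite permutations. For distinct reals $x_1,\dots,x_n$, $\mathrm{std}(x_1,\dots,x_n)$ is the unique $\pi\in\mathcal{S}_n$ with $\pi(i)<\pi(j)\iff x_i<x_j$; for $\sigma\in\mathcal{S}_n$ and $I\subseteq[n]$, $\mathrm{pat}_I(\sigma)=\mathrm{std}((\sigma(i))_{i\in I})$. For $\pi\in\mathcal{S}_k$, $\sigma\in\mathcal{S}_n$, $\mathrm{c\text{-}occ}(\pi,\sigma)$ is the number of intervals $I\subseteq[n]$ with $\mathrm{pat}_I(\sigma)=\pi$ and $\widetilde{\mathrm{c\text{-}occ}}(\pi,\sigma)=\mathrm{c\text{-}occ}(\pi,\sigma)/n$. The feasible region is $$P_k=\{\vec v\in[0,1]^{\mathcal{S}_k}\mid \exists(\sigma^m)_{m\in\mathbb N}\in\mathcal{S}^{\mathbb N}: |\sigma^m|\to\infty,\ \widetilde{\mathrm{c\text{-}occ}}(\pi,\sigma^m)\to v_\pi\ \forall\pi\in\mathcal{S}_k\}.$$ *)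

theory Defs
  imports Complex_Main
begin

text \<open>A permutation of [n] = {1..n} is represented as the list
  [sigma(1), ..., sigma(n)] of its values.\<close>

definition perms :: "nat \<Rightarrow> nat list set" where
  "perms n = {xs. length xs = n \<and> distinct xs \<and> set xs = {1..n}}"

definition all_perms :: "nat list set" where
  "all_perms = (\<Union>n. perms n)"

definition std :: "'a::linorder list \<Rightarrow> nat list" where
  "std xs = map (\<lambda>x. card {y \<in> set xs. y < x} + 1) xs"

text \<open>pat_I(sigma) for I a subset of [n] (indices are 1-based).\<close>
definition pat :: "nat set \<Rightarrow> nat list \<Rightarrow> nat list" where
  "pat I \<sigma> = std (map (\<lambda>i. \<sigma> ! (i - 1)) (sorted_list_of_set I))"

definition is_interval :: "nat set \<Rightarrow> bool" where
  "is_interval I \<longleftrightarrow> (\<exists>a b. I = {a..b})"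

definition c_occ :: "nat list \<Rightarrow> nat list \<Rightarrow> nat" where
  "c_occ \<pi> \<sigma> = card {I. I \<subseteq> {1..length \<sigma>} \<and> is_interval I \<and> pat I \<sigma> = \<pi>}"

definition c_occ_tilde :: "nat list \<Rightarrow> nat list \<Rightarrow> real" where
  "c_occ_tilde \<pi> \<sigma> = real (c_occ \<pi> \<sigma>) / real (length \<sigma>)"

text \<open>Vectors in [0,1]^{S_k} are functions on nat lists vanishing outside S_k.\<close>
definition feasible_region :: "nat \<Rightarrow> (nat list \<Rightarrow> real) set" where
  "feasible_region k = {v. (\<forall>\<pi>. \<pi> \<notin> perms k \<longrightarrow> v \<pi> = 0)
      \<and> (\<forall>\<pi>\<in>perms k. v \<pi> \<in> {0..1})
      \<and> (\<exists>\<sigma>s :: nat \<Rightarrow> nat list. (\<forall>m. \<sigma>s m \<in> all_perms)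
           \<and> filterlim (\<lambda>m. length (\<sigma>s m)) at_top sequentially
           \<and> (\<forall>\<pi>\<in>perms k. (\<lambda>m. c_occ_tilde \<pi> (\<sigma>s m)) \<longlonglongrightarrow> v \<pi>))}"

end

theory Submission
  imports Defs
begin

definition W :: "nat \<Rightarrow> nat list \<Rightarrow> nat list \<Rightarrow> nat" where
  "W k \<pi> s = card {i. i + k \<le> length s \<and> std (take k (drop i s)) = \<pi>}"

lemma length_std[simp]: "length (std xs) = length xs"
  by (simp add: std_def)

lemma pat_window:
  assumes "i + k \<le> length s"
  shows "pat {i+1..<i+1+k} s = std (take k (drop i s))"
proof -
  have "map (\<lambda>j. s!(j-1)) [i+1..<i+1+k] = take k (drop i s)"
    by (rule nth_equalityI) (use assms in \<open>auto simp del: upt_Suc\<close>)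
  then show ?thesis by (simp add: pat_def)
qed

lemma c_occ_W:
  assumes "length \<pi> = k" "k \<ge> 1"
  shows "c_occ \<pi> s = W k \<pi> s"
proof -
  let ?L = "{I. I \<subseteq> {1..length s} \<and> is_interval I \<and> pat I s = \<pi>}"
  let ?R = "{i. i + k \<le> length s \<and> std (take k (drop i s)) = \<pi>}"
  have "bij_betw (\<lambda>i. {i+1..<i+1+k}) ?R ?L"
  proof (rule bij_betw_imageI)
    show "inj_on (\<lambda>i. {i+1..<i+1+k}) ?R"
    proof (rule inj_onI)
      fix i j assume "{i+1..<i+1+k} = {j+1..<j+1+(k::nat)}"
      moreover have "i+1 \<in> {i+1..<i+1+k}" "j+1 \<in> {j+1..<j+1+k}" using assms(2) by auto
      ultimately have "i+1 \<in> {j+1..<j+1+k}" "j+1 \<in> {i+1..<i+1+k}" by simp_all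
      then show "i = j" by simp
    qed
    show "(\<lambda>i. {i+1..<i+1+k}) ` ?R = ?L"
    proof
      show "(\<lambda>i. {i+1..<i+1+k}) ` ?R \<subseteq> ?L"
      proof (rule image_subsetI)
        fix i assume "i \<in> ?R"
        then have i: "i + k \<le> length s" "std (take k (drop i s)) = \<pi>" by auto
        have "{i+1..<i+1+k} = {i+1..i+k}" using assms(2) by auto
        then have "is_interval {i+1..<i+1+k}" unfolding is_interval_def by blast
        moreover have "{i+1..<i+1+k} \<subseteq> {1..length s}" using i by auto
        ultimately show "{i+1..<i+1+k} \<in> ?L"
          using pat_window[OF i(1)] i(2) by simp
      qed
      show "?L \<subseteq> (\<lambda>i. {i+1..<i+1+k}) ` ?R"
      proof
        fix I assume "I \<in> ?L"
        then have I: "I \<subseteq> {1..length s}" "is_interval I" "pat I s = \<pi>" by auto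
        obtain a b where ab: "I = {a..b}" using I(2) unfolding is_interval_def by blast
        have "length (pat I s) = card I" by (simp add: pat_def ab)
        then have c: "card {a..b} = k" using I(3) assms(1) ab by simp
        then have "a \<le> b" using assms(2) by (cases "a \<le> b") auto
        then have "a \<ge> 1" "b \<le> length s" using I(1) ab by auto
        have Ieq: "I = {(a-1)+1..<(a-1)+1+k}" using c \<open>a \<ge> 1\<close> \<open>a \<le> b\<close> ab by auto
        have w: "(a-1) + k \<le> length s" using c \<open>a \<ge> 1\<close> \<open>a \<le> b\<close> \<open>b \<le> length s\<close> by auto
        have "std (take k (drop (a-1) s)) = \<pi>" using pat_window[OF w] I(3) Ieq by simp
        then show "I \<in> (\<lambda>i. {i+1..<i+1+k}) ` ?R" using w Ieq by blast
      qed
    qed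
  qed
  then show ?thesis unfolding c_occ_def W_def by (simp add: bij_betw_same_card)
qed

lemma c_occ_Nil: "c_occ [] s = 1"
proof -
  have "{I. I \<subseteq> {1..length s} \<and> is_interval I \<and> pat I s = []} = {{}}"
  proof
    show "{I. I \<subseteq> {1..length s} \<and> is_interval I \<and> pat I s = []} \<subseteq> {{}}"
    proof
      fix I assume "I \<in> {I. I \<subseteq> {1..length s} \<and> is_interval I \<and> pat I s = []}"
      then have "I \<subseteq> {1..length s}" "pat I s = []" by auto
      moreover have "finite I" using \<open>I \<subseteq> _\<close> finite_subset by blast
      ultimately show "I \<in> {{}}" by (simp add: pat_def std_def)
    qed
    show "{{}} \<subseteq> {I. I \<subseteq> {1..length s} \<and> is_interval I \<and> pat I s = []}"
    proof -
      have "is_interval {}" unfolding is_interval_def by (rule exI[of _ 1], rule exI[of _ 0]) simp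
      then show ?thesis by (simp add: pat_def std_def)
    qed
  qed
  then show ?thesis by (simp add: c_occ_def)
qed

lemma std_shift: "std (map ((+) c) xs) = std (xs::nat list)"
proof -
  have "card {y \<in> set (map ((+) c) xs). y < c + x} = card {y \<in> set xs. y < x}" for x
  proof -
    have "{y \<in> set (map ((+) c) xs). y < c + x} = (+) c ` {y \<in> set xs. y < x}" by auto
    then show ?thesis by (simp add: card_image)
  qed
  then show ?thesis by (simp add: std_def)
qed

lemma finite_W: "finite {i. i + k \<le> length s \<and> P i}"
  by (rule finite_subset[of _ "{..length s}"]) auto

lemma W_append:
  assumes k: "k \<ge> 1"
  shows "W k \<pi> xs + W k \<pi> ys \<le> W k \<pi> (xs @ map ((+) c) ys)
       \<and> W k \<pi> (xs @ map ((+) c) ys) \<le> W k \<pi> xs + W k \<pi> ys + k"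
proof -
  define zs where "zs = xs @ map ((+) c) ys"
  define S where "S = {i. i + k \<le> length zs \<and> std (take k (drop i zs)) = \<pi>}"
  define A where "A = {i. i + k \<le> length xs \<and> std (take k (drop i xs)) = \<pi>}"
  define B0 where "B0 = {i. i + k \<le> length ys \<and> std (take k (drop i ys)) = \<pi>}"
  define B where "B = (+) (length xs) ` B0"
  have fS: "finite S" unfolding S_def by (rule finite_W)
  have fA: "finite A" unfolding A_def by (rule finite_W)
  have fB0: "finite B0" unfolding B0_def by (rule finite_W)
  have fB: "finite B" unfolding B_def using fB0 by simp
  have cB: "card B = card B0" unfolding B_def by (simp add: card_image)
  have tA: "take k (drop i zs) = take k (drop i xs)" if "i + k \<le> length xs" for i
    using that by (simp add: zs_def)
  have tB: "take k (drop (length xs + j) zs) = map ((+) c) (take k (drop j ys))" for j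
    by (simp add: zs_def drop_map take_map)
  have AS: "A \<subseteq> S" using tA by (auto simp: A_def S_def zs_def)
  have BS: "B \<subseteq> S" using tB by (auto simp: B_def B0_def S_def zs_def std_shift)
  have AB: "A \<inter> B = {}" using k by (auto simp: A_def B_def)
  have SU: "S \<subseteq> A \<union> B \<union> {length xs - k..<length xs}"
  proof
    fix i assume iS: "i \<in> S"
    show "i \<in> A \<union> B \<union> {length xs - k..<length xs}"
    proof (cases "i + k \<le> length xs")
      case True then show ?thesis using iS tA by (auto simp: A_def S_def)
    next
      case False
      show ?thesis
      proof (cases "i \<ge> length xs")
        case True
        then obtain j where j: "i = length xs + j" using le_Suc_ex by blast
        then have "j \<in> B0" using iS tB[of j] by (auto simp: B0_def S_def zs_def std_shift)
        then show ?thesis using j by (auto simp: B_def)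
      next
        case False
        then show ?thesis using \<open>\<not> i + k \<le> length xs\<close> by auto
      qed
    qed
  qed
  have "card A + card B = card (A \<union> B)" using fA fB AB by (simp add: card_Un_disjoint)
  also have "\<dots> \<le> card S" using AS BS fS by (intro card_mono) auto
  finally have 1: "card A + card B \<le> card S" .
  have "card S \<le> card (A \<union> B \<union> {length xs - k..<length xs})"
    using SU fA fB by (intro card_mono) auto
  also have "\<dots> \<le> card (A \<union> B) + card {length xs - k..<length xs}" by (rule card_Un_le)
  also have "\<dots> \<le> card A + card B + k" using fA fB AB by (simp add: card_Un_disjoint)
  finally have 2: "card S \<le> card A + card B + k" .
  show ?thesis using 1 2 cB unfolding W_def S_def A_def B0_def zs_def by simp
qed

definition dsum :: "nat list \<Rightarrow> nat list \<Rightarrow> nat list" where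
  "dsum xs ys = xs @ map ((+) (length xs)) ys"

fun rep :: "nat \<Rightarrow> nat list \<Rightarrow> nat list" where
  "rep 0 xs = []"
| "rep (Suc r) xs = dsum xs (rep r xs)"

lemma length_rep[simp]: "length (rep r xs) = r * length xs"
  by (induction r) (auto simp: dsum_def)

lemma dsum_perms:
  assumes "xs \<in> perms n" "ys \<in> perms l"
  shows "dsum xs ys \<in> perms (n + l)"
proof -
  have "set (map ((+) n) ys) = {n+1..n+l}"
  proof -
    have "set (map ((+) n) ys) = (+) n ` {1..l}" using assms(2) by (simp add: perms_def)
    also have "\<dots> = {n+1..n+l}" by (simp add: image_add_atLeastAtMost)
    finally show ?thesis .
  qed
  moreover have "distinct (map ((+) n) ys)" using assms(2) by (simp add: perms_def distinct_map)
  ultimately show ?thesis using assms unfolding perms_def dsum_def by auto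
qed

lemma rep_perms: "xs \<in> perms n \<Longrightarrow> rep r xs \<in> perms (r * n)"
proof (induction r)
  case 0 then show ?case by (simp add: perms_def)
next
  case (Suc r)
  then show ?case using dsum_perms[of xs n "rep r xs" "r*n"] by simp
qed

lemma W_Nil: "k \<ge> 1 \<Longrightarrow> W k \<pi> [] = 0"
  by (simp add: W_def)

lemma W_rep:
  assumes "k \<ge> 1"
  shows "r * W k \<pi> xs \<le> W k \<pi> (rep r xs) \<and> W k \<pi> (rep r xs) \<le> r * W k \<pi> xs + r * k"
proof (induction r)
  case 0 then show ?case using W_Nil[OF assms] by simp
next
  case (Suc r)
  then show ?case using W_append[OF assms, of \<pi> xs "rep r xs" "length xs"]
    by (simp add: dsum_def)
qed

lemma W_combo:
  assumes "k \<ge> 1"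
  shows "p * W k \<pi> xs + q * W k \<pi> ys \<le> W k \<pi> (dsum (rep p xs) (rep q ys))
     \<and> W k \<pi> (dsum (rep p xs) (rep q ys)) \<le> p * W k \<pi> xs + q * W k \<pi> ys + (p + q + 1) * k"
  using W_append[OF assms, of \<pi> "rep p xs" "rep q ys" "length (rep p xs)"]
    W_rep[OF assms, of p \<pi> xs] W_rep[OF assms, of q \<pi> ys]
  by (simp add: dsum_def algebra_simps)

lemma key_bound:
  fixes n l a b N X Y C k :: nat
  assumes "n \<ge> 1" "l \<ge> 1" "a + b = N"
    "l*a*X + n*b*Y \<le> C" "C \<le> l*a*X + n*b*Y + (l*a + n*b + 1)*k"
  shows "\<bar>real C/(real n*real l*real N) - (real a/real N * (real X/real n) + real b/real N*(real Y/real l))\<bar>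
     \<le> real k * (1/real n + 1/real l + 1/(real n * real l))"
proof (cases "N = 0")
  case True
  then show ?thesis by simp
next
  case False
  define E where "E = C - (l*a*X + n*b*Y)"
  have CE: "real C = real (l*a*X) + real (n*b*Y) + real E" using assms(4) by (simp add: E_def)
  have "E \<le> (l*a + n*b + 1)*k" using assms(5) by (simp add: E_def)
  also have "\<dots> \<le> (l*N + n*N + N)*k" using assms(3) False
    by (intro mult_right_mono add_mono) auto
  finally have Eb: "real E \<le> (real l + real n + 1) * real N * real k"
    by (simp add: algebra_simps flip: of_nat_add of_nat_mult)
  have pos: "real n > 0" "real l > 0" "real N > 0" using assms False by auto
  have "real C/(real n*real l*real N) - (real a/real N * (real X/real n) + real b/real N*(real Y/real l))
     = real E / (real n * real l * real N)"
    using pos unfolding CE by (simp add: field_simps)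
  moreover have "real E / (real n * real l * real N) \<le> real k * (1/real n + 1/real l + 1/(real n * real l))"
  proof -
    have "real E / (real n * real l * real N) \<le> (real l + real n + 1) * real N * real k / (real n * real l * real N)"
      using Eb pos by (intro divide_right_mono) auto
    also have "\<dots> = real k * (1/real n + 1/real l + 1/(real n * real l))"
      using pos by (simp add: field_simps)
    finally show ?thesis .
  qed
  moreover have "real E / (real n * real l * real N) \<ge> 0" by simp
  ultimately show ?thesis by simp
qed

lemma null_cmp:
  fixes f :: "'a \<Rightarrow> real"
  assumes "eventually (\<lambda>x. norm (f x) \<le> g x) F" "(g \<longlongrightarrow> 0) F"
  shows "(f \<longlongrightarrow> 0) F"
proof (rule tendsto_0_le[OF assms(2), of _ 1])
  show "\<forall>\<^sub>F x in F. norm (f x) \<le> norm (g x) * 1"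
    using assms(1) by (rule eventually_mono) auto
qed

lemma real_len_top:
  assumes "filterlim (\<lambda>m. length (f m)) at_top sequentially"
  shows "filterlim (\<lambda>m. real (length (f m))) at_top sequentially"
  using filterlim_compose[OF filterlim_real_sequentially assms] by (simp add: o_def)

lemma inv_len_0:
  assumes "filterlim (\<lambda>m. length (f m)) at_top sequentially"
  shows "(\<lambda>m. 1 / real (length (f m))) \<longlonglongrightarrow> 0"
  using tendsto_inverse_0_at_top[OF real_len_top[OF assms]] by (simp add: divide_inverse)

lemma ev_len_ge1:
  assumes "filterlim (\<lambda>m. length (f m)) at_top sequentially"
  shows "eventually (\<lambda>m. length (f m) \<ge> 1) sequentially"
  using assms unfolding filterlim_at_top by blast

lemma all_perms_len: "s \<in> all_perms \<Longrightarrow> s \<in> perms (length s)"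
  by (auto simp: all_perms_def perms_def)

lemma conv01: "0 \<le> (t::real) \<Longrightarrow> t \<le> 1 \<Longrightarrow> x \<in> {0..1} \<Longrightarrow> y \<in> {0..1} \<Longrightarrow> (1 - t) * x + t * y \<in> {0..1}"
proof -
  assume a: "0 \<le> t" "t \<le> 1" "x \<in> {0..1}" "y \<in> {0..1}"
  have "(1 - t) * x \<le> (1 - t)" "t * y \<le> t" using a by (auto intro: mult_left_le)
  then show ?thesis using a by auto
qed

theorem mainTheorem8:
  fixes k :: nat
  shows "\<forall>v\<in>feasible_region k. \<forall>w\<in>feasible_region k. \<forall>t::real. 0 \<le> t \<and> t \<le> 1 \<longrightarrow>
           (\<lambda>\<pi>. (1 - t) * v \<pi> + t * w \<pi>) \<in> feasible_region k"
proof (intro ballI allI impI)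
  fix v w t assume v: "v \<in> feasible_region k" and w: "w \<in> feasible_region k" and t: "0 \<le> t \<and> t \<le> (1::real)"
  obtain \<sigma>s where \<sigma>s: "\<forall>m. \<sigma>s m \<in> all_perms" "filterlim (\<lambda>m. length (\<sigma>s m)) at_top sequentially"
    "\<forall>\<pi>\<in>perms k. (\<lambda>m. c_occ_tilde \<pi> (\<sigma>s m)) \<longlonglongrightarrow> v \<pi>"
    using v unfolding feasible_region_def by blast
  obtain \<tau>s where \<tau>s: "\<forall>m. \<tau>s m \<in> all_perms" "filterlim (\<lambda>m. length (\<tau>s m)) at_top sequentially"
    "\<forall>\<pi>\<in>perms k. (\<lambda>m. c_occ_tilde \<pi> (\<tau>s m)) \<longlonglongrightarrow> w \<pi>"
    using w unfolding feasible_region_def by blast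
  have v0: "\<forall>\<pi>. \<pi> \<notin> perms k \<longrightarrow> v \<pi> = 0" "\<forall>\<pi>\<in>perms k. v \<pi> \<in> {0..1}"
    using v unfolding feasible_region_def by auto
  have w0: "\<forall>\<pi>. \<pi> \<notin> perms k \<longrightarrow> w \<pi> = 0" "\<forall>\<pi>\<in>perms k. w \<pi> \<in> {0..1}"
    using w unfolding feasible_region_def by auto
  let ?u = "\<lambda>\<pi>. (1 - t) * v \<pi> + t * w \<pi>"
  have base: "(\<forall>\<pi>. \<pi> \<notin> perms k \<longrightarrow> ?u \<pi> = 0) \<and> (\<forall>\<pi>\<in>perms k. ?u \<pi> \<in> {0..1})"
    using v0 w0 t conv01 by auto
  show "?u \<in> feasible_region k"
  proof (cases "k = 0")
    case True
    have pk: "perms k = {[]}" using True by (auto simp: perms_def)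
    have lim0: "(\<lambda>m. c_occ_tilde [] (f m)) \<longlonglongrightarrow> 0"
      if "filterlim (\<lambda>m. length (f m)) at_top sequentially" for f
      using inv_len_0[OF that] by (simp add: c_occ_tilde_def c_occ_Nil)
    have "v [] = 0" using LIMSEQ_unique[OF _ lim0[OF \<sigma>s(2)]] \<sigma>s(3) pk by auto
    moreover have "w [] = 0" using LIMSEQ_unique[OF _ lim0[OF \<tau>s(2)]] \<tau>s(3) pk by auto
    ultimately have "\<forall>\<pi>\<in>perms k. (\<lambda>m. c_occ_tilde \<pi> (\<sigma>s m)) \<longlonglongrightarrow> ?u \<pi>"
      using lim0[OF \<sigma>s(2)] pk by simp
    then show ?thesis using base \<sigma>s unfolding feasible_region_def by blast
  next
    case False
    then have k1: "k \<ge> 1" by simp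
    define n where "n m = length (\<sigma>s m)" for m
    define l where "l m = length (\<tau>s m)" for m
    define a where "a m = nat \<lfloor>(1 - t) * real (Suc m)\<rfloor>" for m
    define b where "b m = Suc m - a m" for m
    define \<rho> where "\<rho> m = dsum (rep (l m * a m) (\<sigma>s m)) (rep (n m * b m) (\<tau>s m))" for m
    have a_le: "a m \<le> Suc m" for m
    proof -
      have "(1 - t) * real (Suc m) \<le> real (Suc m)" using t by (simp add: mult_left_le_one_le)
      then have "\<lfloor>(1 - t) * real (Suc m)\<rfloor> \<le> int (Suc m)"
        by (metis floor_mono floor_of_nat)
      then show ?thesis unfolding a_def by (simp add: nat_le_iff)
    qed
    have ab: "a m + b m = Suc m" for m using a_le[of m] by (simp add: b_def)
    have ra: "real (a m) \<le> (1 - t) * real (Suc m) \<and> (1 - t) * real (Suc m) - 1 < real (a m)" for m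
    proof -
      have "0 \<le> (1 - t) * real (Suc m)" using t by simp
      then have "real (a m) = real_of_int \<lfloor>(1 - t) * real (Suc m)\<rfloor>" unfolding a_def by simp
      then show ?thesis by linarith
    qed
    have len\<rho>: "length (\<rho> m) = n m * l m * Suc m" for m
    proof -
      have "length (\<rho> m) = (a m + b m) * (n m * l m)"
        by (simp add: \<rho>_def dsum_def n_def l_def algebra_simps)
      then show ?thesis using ab[of m] by simp
    qed
    have perm\<rho>: "\<rho> m \<in> all_perms" for m
    proof -
      have "\<rho> m \<in> perms (l m * a m * n m + n m * b m * l m)"
        unfolding \<rho>_def using dsum_perms[OF rep_perms rep_perms] all_perms_len \<sigma>s(1) \<tau>s(1)
        unfolding n_def l_def by blast
      then show ?thesis unfolding all_perms_def by blast
    qed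
    have evn: "eventually (\<lambda>m. n m \<ge> 1) sequentially" using ev_len_ge1[OF \<sigma>s(2)] by (simp add: n_def)
    have evl: "eventually (\<lambda>m. l m \<ge> 1) sequentially" using ev_len_ge1[OF \<tau>s(2)] by (simp add: l_def)
    have top\<rho>: "filterlim (\<lambda>m. length (\<rho> m)) at_top sequentially"
    proof (rule filterlim_at_top_mono[OF \<sigma>s(2)])
      show "eventually (\<lambda>m. length (\<sigma>s m) \<le> length (\<rho> m)) sequentially"
        using evl
      proof eventually_elim
        case (elim m)
        have "n m * 1 * 1 \<le> n m * l m * Suc m" using elim by (intro mult_mono) auto
        then show ?case by (simp add: len\<rho> n_def)
      qed
    qed
    define \<alpha> where "\<alpha> m = real (a m) / real (Suc m)" for m
    have \<alpha>lim: "\<alpha> \<longlonglongrightarrow> 1 - t"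
    proof (rule LIM_zero_cancel, rule null_cmp)
      show "(\<lambda>m. inverse (real (Suc m))) \<longlonglongrightarrow> 0" by (rule LIMSEQ_inverse_real_of_nat)
      show "\<forall>\<^sub>F m in sequentially. norm (\<alpha> m - (1 - t)) \<le> inverse (real (Suc m))"
      proof (rule always_eventually, rule allI)
        fix m
        have p: "real (Suc m) > 0" by simp
        have "\<alpha> m - (1 - t) = (real (a m) - (1 - t) * real (Suc m)) / real (Suc m)"
          using p by (simp add: \<alpha>_def field_simps)
        moreover have "\<bar>real (a m) - (1 - t) * real (Suc m)\<bar> \<le> 1" using ra[of m] by linarith
        ultimately show "norm (\<alpha> m - (1 - t)) \<le> inverse (real (Suc m))"
          using p by (simp add: divide_inverse abs_mult divide_le_eq)
      qed
    qed
    have lims: "(\<lambda>m. c_occ_tilde \<pi> (\<rho> m)) \<longlonglongrightarrow> ?u \<pi>" if \<pi>: "\<pi> \<in> perms k" for \<pi>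
    proof -
      have lk: "length \<pi> = k" using \<pi> by (simp add: perms_def)
      define x where "x = (\<lambda>m. c_occ_tilde \<pi> (\<sigma>s m))"
      define y where "y = (\<lambda>m. c_occ_tilde \<pi> (\<tau>s m))"
      have xl: "x \<longlonglongrightarrow> v \<pi>" using \<sigma>s(3) \<pi> by (simp add: x_def)
      have yl: "y \<longlonglongrightarrow> w \<pi>" using \<tau>s(3) \<pi> by (simp add: y_def)
      define g where "g m = \<alpha> m * x m + (1 - \<alpha> m) * y m" for m
      have gl: "g \<longlonglongrightarrow> (1 - t) * v \<pi> + (1 - (1 - t)) * w \<pi>"
        unfolding g_def by (intro tendsto_intros \<alpha>lim xl yl)
      define e where "e m = real k * (1/real (n m) + 1/real (l m) + 1/real (n m) * (1/real (l m)))" for m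
      have el: "e \<longlonglongrightarrow> 0"
      proof -
        have "(\<lambda>m. 1 / real (n m)) \<longlonglongrightarrow> 0" using inv_len_0[OF \<sigma>s(2)] by (simp add: n_def)
        moreover have "(\<lambda>m. 1 / real (l m)) \<longlonglongrightarrow> 0" using inv_len_0[OF \<tau>s(2)] by (simp add: l_def)
        ultimately have "e \<longlonglongrightarrow> real k * (0 + 0 + 0 * 0)" unfolding e_def by (intro tendsto_intros)
        then show ?thesis by simp
      qed
      have "(\<lambda>m. c_occ_tilde \<pi> (\<rho> m) - g m) \<longlonglongrightarrow> 0"
      proof (rule null_cmp[OF _ el])
        show "\<forall>\<^sub>F m in sequentially. norm (c_occ_tilde \<pi> (\<rho> m) - g m) \<le> e m"
          using evn evl
        proof eventually_elim
          case (elim m)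
          have W: "l m * a m * W k \<pi> (\<sigma>s m) + n m * b m * W k \<pi> (\<tau>s m) \<le> W k \<pi> (\<rho> m)
              \<and> W k \<pi> (\<rho> m) \<le> l m * a m * W k \<pi> (\<sigma>s m) + n m * b m * W k \<pi> (\<tau>s m) + (l m * a m + n m * b m + 1) * k"
            using W_combo[OF k1, of "l m * a m" \<pi> "\<sigma>s m" "n m * b m" "\<tau>s m"] by (simp add: \<rho>_def)
          note kb = key_bound[OF elim(1) elim(2) ab[of m] conjunct1[OF W] conjunct2[OF W]]
          have "real (b m) / real (Suc m) = 1 - \<alpha> m"
          proof -
            have "real (b m) = real (Suc m) - real (a m)" using ab[of m] by (simp add: b_def)
            then show ?thesis by (simp add: \<alpha>_def field_simps)
          qed
          moreover have "real (length (\<rho> m)) = real (n m) * real (l m) * real (Suc m)"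
            by (simp only: len\<rho> of_nat_mult)
          ultimately show ?case using kb
            unfolding g_def x_def y_def e_def c_occ_tilde_def c_occ_W[OF lk k1]
            by (simp add: n_def[symmetric] l_def[symmetric] \<alpha>_def del: of_nat_Suc)
        qed
      qed
      from tendsto_add[OF this gl] show ?thesis by simp
    qed
    show ?thesis using base perm\<rho> top\<rho> lims unfolding feasible_region_def by blast
  qed
qed

end
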